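(* Let $d\ge 5$, let $q_1,\ldots,q_d$ be nonzero real numbers with $|q_i|\ge e^e$, and let $P$ be the parameter defined below. Let $\psi$ be a smooth symmetric probability density on $\mathbb{R}$ supported in $[-1,1]$, and let $K = \widehat{\psi}$ be its (real-valued, symmetric) Fourier transform. Suppose that the inequality $|q_1 m_1^2 + \cdots + q_d m_d^2| < 1$ has no solution in integers $m_1,\ldots,m_d$, not all zero, satisfying $|q_1| m_1^2 + \cdots + |q_d| m_d^2 \le 4 d^3 P^2$. Then $$\operatorname{Re} \int_0^\infty S_1(\alpha)\cdots S_d(\alpha) K(\alpha)\, \mathrm{d}\alpha = 0.$$
   Context: Notation: $e(x) = \exp(2\pi i x)$; $\widehat{\psi}(\alpha) = \int_{\mathbb{R}} \psi(x) e(-\alpha x)\,\mathrm{d}x$. For $j=1,\ldots,d$, $S_j(\alpha) = \sum_{m \in \mathbb{Z},\ P < |q_j|^{1/2} m < 2dP} e(\alpha q_j m^2)$. The parameter $P$ is $P = \exp\{(1 + \tfrac{10 d^2}{\log\log H})\log H\}$ with $H = C_d\, q^{\frac12 + \beta}$, where $q = \max_j |q_j|$, $C_d \ge 1$ is a constant depending on $d$, and $\beta$ is the exponent attached to the signature $(r,s)$ of $(q_1,\ldots,q_d)$ ($r$ positive, $s$ negative entries, $r,s\ge1$): with $r'=\max(r,s)$, $s'=\min(r,s)$, $\beta = \frac{r'}{2s'}$ if $r'\ge s'+3$, $\beta=\frac{s'+2}{2(s'-1)}$ if $r'\in\{s'+1,s'+2\}$, $\beta = \frac{s'+1}{2(s'-2)}$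 if $r'=s'$. *)

theory Defs
  imports "HOL-Analysis.Analysis"
begin

definition ee :: "real \<Rightarrow> complex" where
  "ee x = exp (2 * of_real pi * \<i> * of_real x)"

definition fourier :: "(real \<Rightarrow> real) \<Rightarrow> real \<Rightarrow> complex" where
  "fourier \<psi> \<alpha> = (LINT x|lborel. of_real (\<psi> x) * ee (- \<alpha> * x))"

definition smooth_fun :: "(real \<Rightarrow> real) \<Rightarrow> bool" where
  "smooth_fun f \<longleftrightarrow> (\<forall>n x. ((deriv ^^ n) f) differentiable (at x))"

definition S_sum :: "nat \<Rightarrow> real \<Rightarrow> real \<Rightarrow> real \<Rightarrow> complex" where
  "S_sum d P qj \<alpha> =
     (\<Sum>m\<in>{m::int. P < sqrt \<bar>qj\<bar> * of_int m \<and> sqrt \<bar>qj\<bar> * of_int m < 2 * real d * P}.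
        ee (\<alpha> * qj * (of_int m)^2))"

definition npos :: "nat \<Rightarrow> (nat \<Rightarrow> real) \<Rightarrow> nat" where
  "npos d q = card {j\<in>{1..d}. q j > 0}"
definition nneg :: "nat \<Rightarrow> (nat \<Rightarrow> real) \<Rightarrow> nat" where
  "nneg d q = card {j\<in>{1..d}. q j < 0}"

definition beta_exp :: "nat \<Rightarrow> nat \<Rightarrow> real" where
  "beta_exp r s = (let r' = max r s; s' = min r s in
     if r' \<ge> s' + 3 then real r' / (2 * real s')
     else if r' = s' + 1 \<or> r' = s' + 2 then (real s' + 2) / (2 * (real s' - 1))
     else (real s' + 1) / (2 * (real s' - 2)))"

definition qmax :: "nat \<Rightarrow> (nat \<Rightarrow> real) \<Rightarrow> real" where
  "qmax d q = Max ((\<lambda>j. \<bar>q j\<bar>) ` {1..d})"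

definition H_par :: "nat \<Rightarrow> real \<Rightarrow> (nat \<Rightarrow> real) \<Rightarrow> real" where
  "H_par d C q = C * qmax d q powr (1/2 + beta_exp (npos d q) (nneg d q))"

definition P_par :: "nat \<Rightarrow> real \<Rightarrow> (nat \<Rightarrow> real) \<Rightarrow> real" where
  "P_par d C q = (let H = H_par d C q in
     exp ((1 + 10 * (real d)^2 / ln (ln H)) * ln H))"

end

theory Submission
  imports Defs
begin

lemma smooth_deriv:
  assumes "smooth_fun f"
  shows "DERIV ((deriv ^^ n) f) x :> (deriv ^^ Suc n) f x"
proof -
  have "((deriv ^^ n) f) differentiable (at x)" using assms unfolding smooth_fun_def by blast
  then show ?thesis by (simp add: DERIV_deriv_iff_real_differentiable)
qed

lemma smooth_isCont:
  assumes "smooth_fun f"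
  shows "isCont ((deriv ^^ n) f) x"
  using smooth_deriv[OF assms] DERIV_isCont by blast

lemma psi_one:
  assumes sm: "smooth_fun \<psi>" and supp: "\<forall>x. \<bar>x\<bar> > 1 \<longrightarrow> \<psi> x = 0"
  shows "\<psi> 1 = 0"
proof -
  have c: "isCont \<psi> 1" using smooth_isCont[OF sm, where n=0 and x=1] by simp
  have l: "(\<lambda>n. 1 + inverse (real (Suc n))) \<longlonglongrightarrow> 1 + 0"
    by (intro tendsto_add tendsto_const) (rule LIMSEQ_inverse_real_of_nat)
  have "(\<lambda>n. \<psi> (1 + inverse (real (Suc n)))) \<longlonglongrightarrow> \<psi> 1"
    using isCont_tendsto_compose[OF c] l by simp
  moreover have "(\<lambda>n. \<psi> (1 + inverse (real (Suc n)))) = (\<lambda>n. 0)"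
  proof
    fix n
    have "\<bar>1 + inverse (real (Suc n))\<bar> > 1" by simp
    then show "\<psi> (1 + inverse (real (Suc n))) = 0" using supp by blast
  qed
  ultimately show ?thesis using LIMSEQ_unique tendsto_const by metis
qed

lemma psi_taylor:
  assumes sm: "smooth_fun \<psi>" and supp: "\<forall>x. \<bar>x\<bar> > 1 \<longrightarrow> \<psi> x = 0"
    and nn: "\<forall>x. \<psi> x \<ge> 0"
  shows "\<exists>L\<ge>0. \<forall>x\<in>{-1..1}. \<psi> x \<le> L * (1 - x)^2"
proof -
  have p1: "\<psi> 1 = 0" by (rule psi_one[OF sm supp])
  have d1: "deriv \<psi> 1 = 0"
  proof (rule DERIV_local_min)
    show "DERIV \<psi> 1 :> deriv \<psi> 1" using smooth_deriv[OF sm, of 0 1] by simp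
    show "(0::real) < 1" by simp
    show "\<forall>y. \<bar>1 - y\<bar> < 1 \<longrightarrow> \<psi> 1 \<le> \<psi> y" using p1 nn by simp
  qed
  have "continuous_on {-1..1} ((deriv ^^ 2) \<psi>)"
    using smooth_isCont[OF sm] by (simp add: continuous_at_imp_continuous_on)
  then have "bounded ((deriv ^^ 2) \<psi> ` {-1..1})"
    by (intro compact_imp_bounded compact_continuous_image) auto
  then obtain M where M0: "\<forall>y\<in>(deriv ^^ 2) \<psi> ` {-1..1}. norm y \<le> M"
    unfolding bounded_iff by blast
  have M: "\<bar>(deriv ^^ 2) \<psi> t\<bar> \<le> M" if "t \<in> {-1..1}" for t
    using M0 that by auto
  have M00: "M \<ge> 0" using M[of 0] by simp
  show ?thesis
  proof (intro exI[of _ "M/2"] conjI ballI)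
    show "M/2 \<ge> 0" using M00 by simp
    fix x :: real assume x: "x \<in> {-1..1}"
    show "\<psi> x \<le> M / 2 * (1 - x)^2"
    proof (cases "x = 1")
      case True then show ?thesis using p1 by simp
    next
      case False
      obtain t where t: "(if x < 1 then x < t \<and> t < 1 else 1 < t \<and> t < x)"
        and eq: "\<psi> x = (\<Sum>m<2. ((deriv ^^ m) \<psi> 1 / fact m) * (x - 1)^m) + ((deriv ^^ 2) \<psi> t / fact 2) * (x - 1)^2"
        using Taylor[of 2 "\<lambda>m. (deriv ^^ m) \<psi>" \<psi> "-1" 1 1 x] smooth_deriv[OF sm] x False by auto
      have tI: "t \<in> {-1..1}" using t x False by (auto split: if_splits)
      have eq2: "\<psi> x = ((deriv ^^ 2) \<psi> t / 2) * (x - 1)^2"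
        using eq p1 d1 by (simp add: numeral_2_eq_2)
      have "((deriv ^^ 2) \<psi> t / 2) * (x - 1)^2 \<le> (M/2) * (x-1)^2"
        using M[OF tI] by (intro mult_right_mono) auto
      then show ?thesis using eq2 by (simp add: power2_commute)
    qed
  qed
qed

lemma fejer_formula:
  fixes T y :: real
  assumes T: "T > 0" and y: "y \<noteq> 0"
  shows "(LINT a|lborel. indicator {0..T} a * ((1 - a/T) * cos (2*pi*a*y)))
       = (1 - cos (2*pi*y*T)) / (T * (2*pi*y)^2)"
proof -
  define c where "c = 2*pi*y"
  have c0: "c \<noteq> 0" using y by (simp add: c_def)
  define F where "F a = (1 - a/T) * sin (c*a) / c - cos (c*a) / (T * c^2)" for a
  have D: "(F has_vector_derivative ((1 - a/T) * cos (2*pi*a*y))) (at a within {0..T})" for a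
  proof -
    have "(F has_real_derivative ((1 - a/T) * cos (c*a))) (at a)"
      unfolding F_def using c0 T
      by (auto intro!: derivative_eq_intros simp: field_simps power2_eq_square)
    then show ?thesis
      by (simp add: has_real_derivative_iff_has_vector_derivative[symmetric] c_def mult_ac
           has_field_derivative_at_within)
  qed
  have C: "continuous_on {0..T} (\<lambda>a. (1 - a/T) * cos (2*pi*a*y))"
    using T by (intro continuous_intros) auto
  have "(LINT a|lborel. indicator {0..T} a *\<^sub>R ((1 - a/T) * cos (2*pi*a*y))) = F T - F 0"
    by (rule integral_FTC_atLeastAtMost[OF _ D C]) (use T in auto)
  also have "\<dots> = (1 - cos (2*pi*y*T)) / (T * (2*pi*y)^2)"
    unfolding F_def c_def using T by (simp add: mult_ac diff_divide_distrib)
  finally show ?thesis by simp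
qed

lemma fejer_bound:
  fixes T y :: real
  assumes T: "T > 0" and y: "y \<noteq> 0"
  shows "\<bar>LINT a|lborel. indicator {0..T} a * ((1 - a/T) * cos (2*pi*a*y))\<bar> \<le> 1 / (2 * pi^2 * T * y^2)"
proof -
  have "(2*pi*y)^2 > 0" using y by simp
  then have p: "T * (2*pi*y)^2 > 0" using T by simp
  have "\<bar>1 - cos (2*pi*y*T)\<bar> \<le> 2" by (smt (verit) cos_ge_minus_one cos_le_one)
  then have "\<bar>(1 - cos (2*pi*y*T)) / (T * (2*pi*y)^2)\<bar> \<le> 2 / (T * (2*pi*y)^2)"
    using p by (simp add: abs_div_pos divide_right_mono)
  also have "\<dots> = 1 / (2 * pi^2 * T * y^2)" by (simp add: power2_eq_square field_simps)
  finally show ?thesis using fejer_formula[OF T y] by simp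
qed

lemma psi_times_bounded_integrable:
  fixes \<psi> g :: "real \<Rightarrow> real"
  assumes "integrable lborel \<psi>" "\<forall>x. \<psi> x \<ge> 0" "g \<in> borel_measurable borel"
    and "\<And>x. \<bar>g x\<bar> \<le> 1" and [measurable]: "\<psi> \<in> borel_measurable borel"
  shows "integrable lborel (\<lambda>x. \<psi> x * g x)"
proof (rule Bochner_Integration.integrable_bound[OF assms(1)])
  show "(\<lambda>x. \<psi> x * g x) \<in> borel_measurable lborel" using assms(3) by measurable
  show "AE x in lborel. norm (\<psi> x * g x) \<le> norm (\<psi> x)"
    using assms(2,4) by (auto simp: abs_mult intro!: mult_left_le)
qed

lemma core:
  fixes \<psi> :: "real \<Rightarrow> real" and Q T L :: real
  assumes meas[measurable]: "\<psi> \<in> borel_measurable borel"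
    and nn: "\<forall>x. \<psi> x \<ge> 0" and int: "integrable lborel \<psi>" and one: "(LINT x|lborel. \<psi> x) = 1"
    and supp: "\<forall>x. \<bar>x\<bar> > 1 \<longrightarrow> \<psi> x = 0"
    and Lb: "\<forall>x. \<psi> x \<le> L * (Q - x)^2" and T: "T > 0" and L0: "L \<ge> 0"
  shows "integrable lborel (\<lambda>a. indicator {0..T} a * (1 - a/T) *
            (LINT x|lborel. \<psi> x * cos (2*pi*a*(Q - x))))"
    and "\<bar>LINT a|lborel. indicator {0..T} a * (1 - a/T) *
            (LINT x|lborel. \<psi> x * cos (2*pi*a*(Q - x)))\<bar> \<le> L / (pi^2 * T)"
proof -
  define H where "H a x = indicator {0..T} a * (1 - a/T) * (\<psi> x * cos (2*pi*a*(Q - x)))" for a x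
  have Hm[measurable]: "(\<lambda>(a,x). H a x) \<in> borel_measurable (lborel \<Otimes>\<^sub>M lborel)"
    unfolding H_def by measurable
  have intx: "integrable lborel (\<lambda>x. \<psi> x * cos (2*pi*a*(Q - x)))" for a
    by (rule psi_times_bounded_integrable[OF int nn]) auto
  have intxa: "integrable lborel (\<lambda>x. \<psi> x * \<bar>cos (2*pi*a*(Q - x))\<bar>)" for a
    by (rule psi_times_bounded_integrable[OF int nn]) auto
  have le1: "(LINT x|lborel. \<psi> x * \<bar>cos (2*pi*a*(Q - x))\<bar>) \<le> 1" for a
  proof -
    have "(LINT x|lborel. \<psi> x * \<bar>cos (2*pi*a*(Q - x))\<bar>) \<le> (LINT x|lborel. \<psi> x)"
      using nn by (intro integral_mono[OF intxa int]) (auto intro!: mult_left_le)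
    then show ?thesis using one by simp
  qed
  have ge0: "(LINT x|lborel. \<psi> x * \<bar>cos (2*pi*a*(Q - x))\<bar>) \<ge> 0" for a
    using nn by (intro integral_nonneg_AE) auto
  have normH: "(LINT x|lborel. norm (H a x)) = indicator {0..T} a * \<bar>1 - a/T\<bar> *
      (LINT x|lborel. \<psi> x * \<bar>cos (2*pi*a*(Q - x))\<bar>)" for a
  proof -
    have "(\<lambda>x. norm (H a x)) = (\<lambda>x. (indicator {0..T} a * \<bar>1 - a/T\<bar>) * (\<psi> x * \<bar>cos (2*pi*a*(Q - x))\<bar>))"
      using nn by (auto simp: H_def abs_mult indicator_def)
    then show ?thesis by simp
  qed
  have normH': "(LINT x|lborel. \<bar>H a x\<bar>) = indicator {0..T} a * \<bar>1 - a/T\<bar> *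
      (LINT x|lborel. \<psi> x * \<bar>cos (2*pi*a*(Q - x))\<bar>)" for a
    using normH[of a] by simp
  have prodint: "integrable (lborel \<Otimes>\<^sub>M lborel) (\<lambda>(a,x). H a x)"
  proof (rule lborel_pair.Fubini_integrable[OF Hm])
    show "integrable lborel (\<lambda>a. LINT x|lborel. norm (case (a, x) of (a, x) \<Rightarrow> H a x))"
    proof (rule Bochner_Integration.integrable_bound[of _ "indicator {0..T} :: real \<Rightarrow> real"])
      show "integrable lborel (indicator {0..T} :: real \<Rightarrow> real)"
        by (rule integrable_real_indicator) (use T in \<open>auto simp: emeasure_lborel_Icc\<close>)
      show "(\<lambda>a. LINT x|lborel. norm (case (a, x) of (a, x) \<Rightarrow> H a x)) \<in> borel_measurable lborel"
        by measurable
      show "AE a in lborel. norm (LINT x|lborel. norm (case (a, x) of (a, x) \<Rightarrow> H a x))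
              \<le> norm (indicator {0..T} a :: real)"
      proof (rule AE_I2)
        fix a :: real
        show "norm (LINT x|lborel. norm (case (a, x) of (a, x) \<Rightarrow> H a x)) \<le> norm (indicator {0..T} a :: real)"
        proof (cases "a \<in> {0..T}")
          case True
          then have "\<bar>1 - a/T\<bar> \<le> 1" using T by (auto simp: field_simps)
          then have "\<bar>1 - a/T\<bar> * (LINT x|lborel. \<psi> x * \<bar>cos (2*pi*a*(Q - x))\<bar>) \<le> 1 * 1"
            using le1[of a] ge0[of a] by (intro mult_mono) auto
          then show ?thesis using True ge0[of a] by (simp add: normH' abs_mult)
        next
          case False then show ?thesis by (simp add: normH')
        qed
      qed
    qed
    show "AE a in lborel. integrable lborel (\<lambda>x. case (a, x) of (a, x) \<Rightarrow> H a x)"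
      unfolding H_def using intx by simp
  qed
  have Fub: "(LINT x|lborel. LINT a|lborel. H a x) = (LINT a|lborel. LINT x|lborel. H a x)"
    using lborel_pair.Fubini_integral[OF prodint] .
  have inner_a: "(LINT x|lborel. H a x) = indicator {0..T} a * (1 - a/T) *
            (LINT x|lborel. \<psi> x * cos (2*pi*a*(Q - x)))" for a
    unfolding H_def by simp
  show intres: "integrable lborel (\<lambda>a. indicator {0..T} a * (1 - a/T) *
            (LINT x|lborel. \<psi> x * cos (2*pi*a*(Q - x))))"
    using lborel_pair.integrable_fst'[OF prodint] inner_a by simp
  define FF where "FF y = (LINT a|lborel. indicator {0..T} a * ((1 - a/T) * cos (2*pi*a*y)))" for y
  have inner_x: "(LINT a|lborel. H a x) = \<psi> x * FF (Q - x)" for x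
  proof -
    have "(\<lambda>a. H a x) = (\<lambda>a. \<psi> x * (indicator {0..T} a * ((1 - a/T) * cos (2*pi*a*(Q - x)))))"
      unfolding H_def by (auto simp: indicator_def)
    then show ?thesis unfolding FF_def by simp
  qed
  have intx2: "integrable lborel (\<lambda>x. \<psi> x * FF (Q - x))"
    using lborel_pair.integrable_snd[OF prodint] inner_x by simp
  have ptw: "norm (\<psi> x * FF (Q - x)) \<le> indicator {-1..1} x * (L / (2 * pi^2 * T))" for x
  proof (cases "x \<in> {-1..1}")
    case False
    then have "\<psi> x = 0" using supp by auto
    then show ?thesis using False by simp
  next
    case True
    show ?thesis
    proof (cases "Q - x = 0")
      case True
      then have "\<psi> x = 0" using Lb nn by (metis antisym power_zero_numeral mult_zero_right)
      then show ?thesis using \<open>x \<in> {-1..1}\<close> L0 T by simp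
    next
      case False
      have b: "\<bar>FF (Q - x)\<bar> \<le> 1 / (2 * pi^2 * T * (Q - x)^2)"
        unfolding FF_def by (rule fejer_bound[OF T False])
      have "\<bar>\<psi> x\<bar> * \<bar>FF (Q - x)\<bar> \<le> (L * (Q - x)^2) * (1 / (2 * pi^2 * T * (Q - x)^2))"
        using Lb nn b L0 by (intro mult_mono) auto
      also have "\<dots> = L / (2 * pi^2 * T)" using False by (simp add: field_simps)
      finally show ?thesis using True by (simp add: abs_mult)
    qed
  qed
  have "\<bar>LINT a|lborel. indicator {0..T} a * (1 - a/T) *
            (LINT x|lborel. \<psi> x * cos (2*pi*a*(Q - x)))\<bar> = norm (LINT x|lborel. \<psi> x * FF (Q - x))"
    using Fub inner_a inner_x by simp
  also have "\<dots> \<le> (LINT x|lborel. indicator {-1..1} (x::real) * (L / (2 * pi^2 * T)))"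
  proof -
    have ig: "integrable lborel (indicator {-1..1} :: real \<Rightarrow> real)"
      by (rule integrable_real_indicator) (auto simp: emeasure_lborel_Icc)
    have "norm (LINT x|lborel. \<psi> x * FF (Q - x)) \<le> (LINT x|lborel. norm (\<psi> x * FF (Q - x)))"
      by (rule integral_norm_bound)
    also have "\<dots> \<le> (LINT x|lborel. indicator {-1..1} (x::real) * (L / (2 * pi^2 * T)))"
      apply (rule Bochner_Integration.integral_mono)
      using ptw apply (auto intro!: integrable_norm intx2 integrable_mult_left ig)
      done
    finally show ?thesis .
  qed
  also have "\<dots> = L / (pi^2 * T)" by simp
  finally show "\<bar>LINT a|lborel. indicator {0..T} a * (1 - a/T) *
            (LINT x|lborel. \<psi> x * cos (2*pi*a*(Q - x)))\<bar> \<le> L / (pi^2 * T)" .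
qed

lemma ee_cis: "ee t = cis (2*pi*t)"
  by (simp add: ee_def cis_conv_exp mult_ac)

lemma ee_add: "ee a * ee b = ee (a + b)"
  by (simp add: ee_cis cis_mult distrib_left)

lemma ee_sum: "finite I \<Longrightarrow> (\<Prod>i\<in>I. ee (f i)) = ee (\<Sum>i\<in>I. f i)"
  by (induction I rule: finite_induct) (auto simp: ee_add, simp add: ee_def)

lemma ee_meas[measurable]: "ee \<in> borel_measurable borel"
  unfolding ee_def by (intro borel_measurable_continuous_onI continuous_intros)

lemma Re_term:
  fixes \<psi> :: "real \<Rightarrow> real"
  assumes meas[measurable]: "\<psi> \<in> borel_measurable borel"
    and nn: "\<forall>x. \<psi> x \<ge> 0" and int: "integrable lborel \<psi>"
  shows "Re (ee (a * Q) * fourier \<psi> a) = (LINT x|lborel. \<psi> x * cos (2*pi*a*(Q - x)))"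
proof -
  have eq: "ee (a * Q) * fourier \<psi> a = (LINT x|lborel. of_real (\<psi> x) * ee (a * (Q - x)))"
  proof -
    have "ee (a * Q) * fourier \<psi> a = (LINT x|lborel. ee (a * Q) * (of_real (\<psi> x) * ee (- a * x)))"
      unfolding fourier_def by simp
    also have "\<dots> = (LINT x|lborel. of_real (\<psi> x) * ee (a * (Q - x)))"
      by (intro Bochner_Integration.integral_cong refl)
        (simp add: mult.left_commute ee_add right_diff_distrib)
    finally show ?thesis .
  qed
  have intc: "integrable lborel (\<lambda>x. of_real (\<psi> x) * ee (a * (Q - x)))"
  proof (rule Bochner_Integration.integrable_bound[OF int])
    show "(\<lambda>x. complex_of_real (\<psi> x) * ee (a * (Q - x))) \<in> borel_measurable lborel" by measurable
    show "AE x in lborel. norm (complex_of_real (\<psi> x) * ee (a * (Q - x))) \<le> norm (\<psi> x)"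
      by (simp add: ee_cis norm_mult)
  qed
  have "Re (ee (a * Q) * fourier \<psi> a) = (LINT x|lborel. Re (of_real (\<psi> x) * ee (a * (Q - x))))"
    unfolding eq by (rule integral_Re[OF intc, symmetric])
  also have "\<dots> = (LINT x|lborel. \<psi> x * cos (2*pi*a*(Q - x)))"
    by (simp add: ee_cis mult_ac)
  finally show ?thesis .
qed

lemma psi_bound_Q:
  fixes \<psi> :: "real \<Rightarrow> real"
  assumes sym: "\<forall>x. \<psi> (- x) = \<psi> x" and supp: "\<forall>x. \<bar>x\<bar> > 1 \<longrightarrow> \<psi> x = 0"
    and nn: "\<forall>x. \<psi> x \<ge> 0" and L0: "L \<ge> 0" and Lt: "\<forall>x\<in>{-1..1}. \<psi> x \<le> L * (1 - x)^2"
    and Q: "\<bar>Q\<bar> \<ge> 1"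
  shows "\<forall>x. \<psi> x \<le> L * (Q - x)^2"
proof
  fix x
  show "\<psi> x \<le> L * (Q - x)^2"
  proof (cases "\<bar>x\<bar> > 1")
    case True then show ?thesis using supp L0 by simp
  next
    case False
    then have x: "x \<in> {-1..1}" by auto
    show ?thesis
    proof (cases "Q \<ge> 1")
      case True
      have "(1 - x)^2 \<le> (Q - x)^2" using x True by (intro power_mono) auto
      then show ?thesis using Lt x L0 by (meson mult_left_mono order_trans)
    next
      case False
      then have Qn: "Q \<le> -1" using Q by auto
      have mx: "-x \<in> {-1..1}" using x by auto
      have "\<psi> x = \<psi> (-x)" using sym by simp
      also have "\<dots> \<le> L * (1 - (-x))^2" using Lt mx by blast
      also have "\<dots> = L * (1 + x)^2" by simp
      also have "(1 + x)^2 \<le> (x - Q)^2" using x Qn by (intro power_mono) auto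
      then have "L * (1 + x)^2 \<le> L * (Q - x)^2" using L0 by (simp add: power2_commute mult_left_mono)
      finally show ?thesis .
    qed
  qed
qed

theorem lemma2p2:
  fixes d :: nat and q :: "nat \<Rightarrow> real" and C :: real and \<psi> :: "real \<Rightarrow> real"
  assumes d5: "d \<ge> 5"
    and q_nz: "\<forall>j\<in>{1..d}. q j \<noteq> 0"
    and q_big: "\<forall>j\<in>{1..d}. \<bar>q j\<bar> \<ge> exp (exp 1)"
    and sig: "npos d q \<ge> 1" "nneg d q \<ge> 1"
    and C_ge: "C \<ge> 1"
    and \<psi>_smooth: "smooth_fun \<psi>"
    and \<psi>_sym: "\<forall>x. \<psi> (- x) = \<psi> x"
    and \<psi>_nonneg: "\<forall>x. \<psi> x \<ge> 0"
    and \<psi>_int: "integrable lborel \<psi>"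
    and \<psi>_one: "(LINT x|lborel. \<psi> x) = 1"
    and \<psi>_supp: "\<forall>x. \<bar>x\<bar> > 1 \<longrightarrow> \<psi> x = 0"
    and nosol: "\<not> (\<exists>m :: nat \<Rightarrow> int. (\<exists>j\<in>{1..d}. m j \<noteq> 0)
                   \<and> \<bar>\<Sum>j=1..d. q j * (of_int (m j))^2\<bar> < 1
                   \<and> (\<Sum>j=1..d. \<bar>q j\<bar> * (of_int (m j))^2) \<le> 4 * (real d)^3 * (P_par d C q)^2)"
  shows "Re (LINT \<alpha>:{0..}|lborel.
            (\<Prod>j=1..d. S_sum d (P_par d C q) (q j) \<alpha>) * fourier \<psi> \<alpha>) = 0"
proof -
  define P where "P = P_par d C q"
  define A where "A j = {m::int. P < sqrt \<bar>q j\<bar> * of_int m \<and> sqrt \<bar>q j\<bar> * of_int m < 2 * real d * P}" for j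
  define MS where "MS = PiE {1..d} A"
  define Qm where "Qm m = (\<Sum>j=1..d. q j * (of_int (m j))^2)" for m :: "nat \<Rightarrow> int"
  have P0: "P > 0" unfolding P_def P_par_def Let_def by simp
  have Apos: "of_int m > (0::real)" and Aup: "sqrt \<bar>q j\<bar> * of_int m < 2 * real d * P"
    if "j \<in> {1..d}" "m \<in> A j" for j m
  proof -
    have s: "sqrt \<bar>q j\<bar> > 0" using q_nz that by simp
    have "0 < sqrt \<bar>q j\<bar> * of_int m" using that P0 by (auto simp: A_def)
    then show "of_int m > (0::real)" using s by (simp add: zero_less_mult_iff)
    show "sqrt \<bar>q j\<bar> * of_int m < 2 * real d * P" using that by (auto simp: A_def)
  qed
  have finA: "finite (A j)" if j: "j \<in> {1..d}" for j
  proof -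
    have s: "sqrt \<bar>q j\<bar> > 0" using q_nz j by simp
    have "A j \<subseteq> {0..ceiling (2 * real d * P / sqrt \<bar>q j\<bar>)}"
    proof
      fix m assume m: "m \<in> A j"
      have "of_int m < 2 * real d * P / sqrt \<bar>q j\<bar>"
        using Aup[OF j m] s by (simp add: pos_less_divide_eq mult.commute)
      then have "of_int m \<le> real_of_int (ceiling (2 * real d * P / sqrt \<bar>q j\<bar>))"
        using le_of_int_ceiling less_le_trans less_imp_le by blast
      then have "m \<le> ceiling (2 * real d * P / sqrt \<bar>q j\<bar>)" by linarith
      moreover have "m \<ge> 0" using Apos[OF j m] by simp
      ultimately show "m \<in> {0..ceiling (2 * real d * P / sqrt \<bar>q j\<bar>)}" by simp
    qed
    then show ?thesis using finite_subset by blast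
  qed
  have finMS: "finite MS" unfolding MS_def using finA by (intro finite_PiE) auto
  have prod_eq: "(\<Prod>j=1..d. S_sum d P (q j) \<alpha>) = (\<Sum>m\<in>MS. ee (\<alpha> * Qm m))" for \<alpha>
  proof -
    have "(\<Prod>j=1..d. S_sum d P (q j) \<alpha>) = (\<Prod>j\<in>{1..d}. \<Sum>m\<in>A j. ee (\<alpha> * q j * (of_int m)^2))"
      unfolding S_sum_def A_def by simp
    also have "\<dots> = (\<Sum>m\<in>MS. \<Prod>j\<in>{1..d}. ee (\<alpha> * q j * (of_int (m j))^2))"
      unfolding MS_def by (rule prod_sum_PiE) (use finA in auto)
    also have "\<dots> = (\<Sum>m\<in>MS. ee (\<alpha> * Qm m))"
      by (intro sum.cong refl) (simp add: Qm_def ee_sum sum_distrib_left mult.assoc)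
    finally show ?thesis .
  qed
  have Qbig: "\<bar>Qm m\<bar> \<ge> 1" if mMS: "m \<in> MS" for m
  proof (rule ccontr)
    assume "\<not> \<bar>Qm m\<bar> \<ge> 1"
    then have lt: "\<bar>Qm m\<bar> < 1" by simp
    have mA: "m j \<in> A j" if "j \<in> {1..d}" for j using mMS that unfolding MS_def by auto
    have "m 1 \<noteq> 0" using Apos[of 1 "m 1"] mA[of 1] d5 by auto
    then have ex: "\<exists>j\<in>{1..d}. m j \<noteq> 0" using d5 by auto
    have le: "\<bar>q j\<bar> * (of_int (m j))^2 \<le> 4 * (real d)^2 * P^2" if j: "j \<in> {1..d}" for j
    proof -
      have a: "0 \<le> sqrt \<bar>q j\<bar> * of_int (m j)" using Apos[OF j mA[OF j]] by simp
      have "(sqrt \<bar>q j\<bar> * of_int (m j))^2 \<le> (2 * real d * P)^2"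
        using a Aup[OF j mA[OF j]] by (intro power_mono) auto
      then show ?thesis by (simp add: power_mult_distrib)
    qed
    have "(\<Sum>j=1..d. \<bar>q j\<bar> * (of_int (m j))^2) \<le> of_nat (card {1..d}) * (4 * (real d)^2 * P^2)"
      by (rule sum_bounded_above) (use le in auto)
    also have "\<dots> = 4 * (real d)^3 * P^2" by (simp add: power2_eq_square power3_eq_cube)
    finally have "(\<Sum>j=1..d. \<bar>q j\<bar> * (of_int (m j))^2) \<le> 4 * (real d)^3 * (P_par d C q)^2"
      by (simp add: P_def)
    then show False using nosol ex lt unfolding Qm_def by blast
  qed
  obtain L where L0: "L \<ge> 0" and Lt: "\<forall>x\<in>{-1..1}. \<psi> x \<le> L * (1 - x)^2"
    using psi_taylor[OF \<psi>_smooth \<psi>_supp \<psi>_nonneg] by blast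
  have psimeas[measurable]: "\<psi> \<in> borel_measurable borel"
    using smooth_isCont[OF \<psi>_smooth, where n=0]
    by (intro borel_measurable_continuous_onI continuous_at_imp_continuous_on) auto
  have LQ: "\<forall>x. \<psi> x \<le> L * (Qm m - x)^2" if "m \<in> MS" for m
    by (rule psi_bound_Q[OF \<psi>_sym \<psi>_supp \<psi>_nonneg L0 Lt Qbig[OF that]])
  define G where "G Q a = (LINT x|lborel. \<psi> x * cos (2*pi*a*(Q - x)))" for Q a
  define F where "F \<alpha> = (\<Prod>j=1..d. S_sum d P (q j) \<alpha>) * fourier \<psi> \<alpha>" for \<alpha>
  have ReF: "Re (F \<alpha>) = (\<Sum>m\<in>MS. G (Qm m) \<alpha>)" for \<alpha>
  proof -
    have "Re (F \<alpha>) = (\<Sum>m\<in>MS. Re (ee (\<alpha> * Qm m) * fourier \<psi> \<alpha>))"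
      unfolding F_def prod_eq sum_distrib_right by (simp add: Re_sum)
    also have "\<dots> = (\<Sum>m\<in>MS. G (Qm m) \<alpha>)"
      unfolding G_def by (intro sum.cong refl Re_term[OF psimeas \<psi>_nonneg \<psi>_int])
    finally show ?thesis .
  qed
  have goal: "Re (LINT \<alpha>:{0..}|lborel. F \<alpha>) = 0"
  proof (cases "set_integrable lborel {0..} F")
    case False
    then show ?thesis
      by (simp add: set_lebesgue_integral_def set_integrable_def not_integrable_integral_eq)
  next
    case True
    define h where "h \<alpha> = indicator {0..} \<alpha> * (\<Sum>m\<in>MS. G (Qm m) \<alpha>)" for \<alpha> :: real
    have hRe: "h \<alpha> = Re (indicator {0..} \<alpha> *\<^sub>R F \<alpha>)" for \<alpha>
      by (simp add: h_def ReF)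
    have intF: "integrable lborel (\<lambda>\<alpha>. indicator {0..} \<alpha> *\<^sub>R F \<alpha>)"
      using True by (simp add: set_integrable_def)
    have hint: "integrable lborel h"
      unfolding hRe using intF by (rule integrable_Re)
    have eqRe: "Re (LINT \<alpha>:{0..}|lborel. F \<alpha>) = (LINT \<alpha>|lborel. h \<alpha>)"
      unfolding set_lebesgue_integral_def hRe by (rule integral_Re[OF intF, symmetric])
    define Tn where "Tn n = real (Suc n)" for n
    have Tpos: "Tn n > 0" for n by (simp add: Tn_def)
    define s where "s n \<alpha> = h \<alpha> * (indicator {0..Tn n} \<alpha> * (1 - \<alpha> / Tn n))" for n \<alpha>
    have hmeas[measurable]: "h \<in> borel_measurable lborel" using hint by (rule borel_measurable_integrable)
    have lim: "(\<lambda>n. integral\<^sup>L lborel (s n)) \<longlonglongrightarrow> integral\<^sup>L lborel h"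
    proof (rule integral_dominated_convergence[where w = "\<lambda>\<alpha>. norm (h \<alpha>)"])
      show "h \<in> borel_measurable lborel" by measurable
      show "s n \<in> borel_measurable lborel" for n unfolding s_def by measurable
      show "integrable lborel (\<lambda>\<alpha>. norm (h \<alpha>))" using hint by (rule integrable_norm)
      show "AE \<alpha> in lborel. (\<lambda>n. s n \<alpha>) \<longlonglongrightarrow> h \<alpha>"
      proof (rule AE_I2)
        fix \<alpha> :: real
        show "(\<lambda>n. s n \<alpha>) \<longlonglongrightarrow> h \<alpha>"
        proof (cases "\<alpha> \<ge> 0")
          case False
          then have "h \<alpha> = 0" by (simp add: h_def)
          then show ?thesis by (simp add: s_def)
        next
          case True
          obtain N :: nat where N: "\<alpha> \<le> real N" using real_arch_simple by blast
          have ev: "eventually (\<lambda>n. s n \<alpha> = h \<alpha> * (1 - \<alpha> * inverse (real (Suc n)))) sequentially"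
            unfolding eventually_sequentially
          proof (intro exI allI impI)
            fix n assume "N \<le> n"
            then have "\<alpha> \<le> Tn n" using N by (simp add: Tn_def)
            then show "s n \<alpha> = h \<alpha> * (1 - \<alpha> * inverse (real (Suc n)))"
              using True by (simp add: s_def Tn_def divide_inverse)
          qed
          have "(\<lambda>n. h \<alpha> * (1 - \<alpha> * inverse (real (Suc n)))) \<longlonglongrightarrow> h \<alpha> * (1 - \<alpha> * 0)"
            by (intro tendsto_intros LIMSEQ_inverse_real_of_nat)
          then show ?thesis using ev by (simp add: tendsto_cong)
        qed
      qed
      show "AE \<alpha> in lborel. norm (s n \<alpha>) \<le> norm (h \<alpha>)" for n
      proof (rule AE_I2)
        fix \<alpha> :: real
        have "\<bar>indicator {0..Tn n} \<alpha> * (1 - \<alpha> / Tn n)\<bar> \<le> 1"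
          using Tpos[of n] by (auto simp: indicator_def field_simps)
        then have "\<bar>h \<alpha>\<bar> * \<bar>indicator {0..Tn n} \<alpha> * (1 - \<alpha> / Tn n)\<bar> \<le> \<bar>h \<alpha>\<bar> * 1"
          by (intro mult_left_mono) auto
        then show "norm (s n \<alpha>) \<le> norm (h \<alpha>)" by (simp add: s_def abs_mult)
      qed
    qed
    have bnd: "norm (integral\<^sup>L lborel (s n)) \<le> real (card MS) * (L / pi^2) * inverse (real (Suc n))" for n
    proof -
      have sx: "s n \<alpha> = (\<Sum>m\<in>MS. indicator {0..Tn n} \<alpha> * (1 - \<alpha>/Tn n) * G (Qm m) \<alpha>)" for \<alpha>
        using Tpos[of n] by (auto simp: s_def h_def indicator_def sum_distrib_left sum_distrib_right mult_ac)
      have intm: "integrable lborel (\<lambda>\<alpha>. indicator {0..Tn n} \<alpha> * (1 - \<alpha>/Tn n) * G (Qm m) \<alpha>)"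
        and bm: "\<bar>LINT \<alpha>|lborel. indicator {0..Tn n} \<alpha> * (1 - \<alpha>/Tn n) * G (Qm m) \<alpha>\<bar> \<le> L / (pi^2 * Tn n)"
        if "m \<in> MS" for m
        using core[OF psimeas \<psi>_nonneg \<psi>_int \<psi>_one \<psi>_supp LQ[OF that] Tpos[of n] L0]
        unfolding G_def by auto
      have "integral\<^sup>L lborel (s n) = (\<Sum>m\<in>MS. LINT \<alpha>|lborel. indicator {0..Tn n} \<alpha> * (1 - \<alpha>/Tn n) * G (Qm m) \<alpha>)"
        unfolding sx by (rule Bochner_Integration.integral_sum) (rule intm)
      then have "norm (integral\<^sup>L lborel (s n)) \<le> (\<Sum>m\<in>MS. \<bar>LINT \<alpha>|lborel. indicator {0..Tn n} \<alpha> * (1 - \<alpha>/Tn n) * G (Qm m) \<alpha>\<bar>)"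
        by (simp add: sum_abs)
      also have "\<dots> \<le> (\<Sum>m\<in>MS. L / (pi^2 * Tn n))" by (intro sum_mono bm)
      also have "\<dots> = real (card MS) * (L / pi^2) * inverse (real (Suc n))"
        by (simp add: Tn_def divide_inverse mult_ac)
      finally show ?thesis .
    qed
    have "(\<lambda>n. real (card MS) * (L / pi^2) * inverse (real (Suc n))) \<longlonglongrightarrow> real (card MS) * (L / pi^2) * 0"
      by (intro tendsto_intros LIMSEQ_inverse_real_of_nat)
    then have "(\<lambda>n. integral\<^sup>L lborel (s n)) \<longlonglongrightarrow> 0"
      by (intro Lim_null_comparison[OF always_eventually[OF allI[OF bnd]]]) simp
    then have "integral\<^sup>L lborel h = 0" using lim LIMSEQ_unique by blast
    then show ?thesis using eqRe by simp
  qed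
  then show ?thesis unfolding F_def P_def .
qed

end
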